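(* In the N-CIRL game described in the context, the primal value backup operator $G$, acting on bounded functions $v:\mathcal{S}\times\Delta(\Theta)\to\mathbb{R}$ by $$[Gv](s,b)=\max_{\bar\pi^A}\min_{\bar\pi^D}\Big\{\sum_{a,d,s',\vartheta}b(\vartheta)\bar\pi^A(a\mid s,\vartheta)\bar\pi^D(d\mid s)\mathcal{T}(s'\mid s,a,d)\big(R(s,a,d,s';\vartheta)+\gamma\,v(s',\tau(s,b,a))\big)\Big\},$$ with $\tau_\vartheta(s,b,a)=\bar\pi^A(a\mid s,\vartheta)b(\vartheta)/\sum_{\vartheta'}\bar\pi^A(a\mid s,\vartheta')b(\vartheta')$, is a contraction mapping with respect to the supremum norm. Consequently, iterating $G$ from any bounded initial function converges to the value function of the N-CIRL game, which is the fixed point of $v=Gv$.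
   Context: N-CIRL game: finite state set $\mathcal{S}$, finite attacker action set $\mathcal{A}$, finite defender action set $\mathcal{D}$, transition kernel $\mathcal{T}(s'\mid s,a,d)$, finite intent parameter set $\Theta$, bounded reward $R(s,a,d,s';\theta)$ to the attacker (the defender receives $-R$), discount factor $\gamma\in[0,1)$. The intent $\theta$ is known only to the attacker; states and both players' past actions are publicly observed. The value function is $v(s,b)=\max_{\sigma^A}\min_{\sigma^D}\mathbb{E}[\sum_{t\ge0}\gamma^tR(s_t,a_t,d_t,s_{t+1};\theta)\mid s_0=s,\theta\sim b]$ over behavioral strategies. The max in $G$ is over one-stage attacker strategies $\bar\pi^A:\mathcal{S}\times\Theta\to\Delta(\mathcal{A})$ and the min over one-stage defender strategies $\bar\pi^D:\mathcal{S}\to\Delta(\mathcal{D})$; $\Delta(X)$ is the set of probability distributions on $X$. *)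

theory Defs
  imports Complex_Main
begin

definition simplex :: "('x::finite \<Rightarrow> real) set" where
  "simplex = {p. (\<forall>x. 0 \<le> p x) \<and> sum p UNIV = 1}"

text \<open>Histories: the publicly observed past (state, attacker action, defender action) triples.\<close>

definition att_strats ::
  "((('s::finite \<times> 'a::finite \<times> 'd::finite) list \<Rightarrow> 's \<Rightarrow> 't::finite \<Rightarrow> 'a \<Rightarrow> real)) set" where
  "att_strats = {\<sigma>. \<forall>h s th. \<sigma> h s th \<in> simplex}"

definition def_strats ::
  "((('s::finite \<times> 'a::finite \<times> 'd::finite) list \<Rightarrow> 's \<Rightarrow> 'd \<Rightarrow> real)) set" where
  "def_strats = {\<sigma>. \<forall>h s. \<sigma> h s \<in> simplex}"

fun horizon_payoff ::
  "('s::finite \<Rightarrow> 'a::finite \<Rightarrow> 'd::finite \<Rightarrow> 's \<Rightarrow> real) \<Rightarrow>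
   ('s \<Rightarrow> 'a \<Rightarrow> 'd \<Rightarrow> 's \<Rightarrow> 't::finite \<Rightarrow> real) \<Rightarrow> real \<Rightarrow>
   (('s \<times> 'a \<times> 'd) list \<Rightarrow> 's \<Rightarrow> 't \<Rightarrow> 'a \<Rightarrow> real) \<Rightarrow>
   (('s \<times> 'a \<times> 'd) list \<Rightarrow> 's \<Rightarrow> 'd \<Rightarrow> real) \<Rightarrow>
   nat \<Rightarrow> ('s \<times> 'a \<times> 'd) list \<Rightarrow> 's \<Rightarrow> 't \<Rightarrow> real" where
  "horizon_payoff T R \<gamma> \<sigma>A \<sigma>D 0 h s th = 0"
| "horizon_payoff T R \<gamma> \<sigma>A \<sigma>D (Suc n) h s th =
     (\<Sum>a\<in>UNIV. \<Sum>d\<in>UNIV. \<Sum>s'\<in>UNIV.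
        \<sigma>A h s th a * \<sigma>D h s d * T s a d s' *
        (R s a d s' th + \<gamma> * horizon_payoff T R \<gamma> \<sigma>A \<sigma>D n (h @ [(s, a, d)]) s' th))"

definition game_payoff where
  "game_payoff T R \<gamma> \<sigma>A \<sigma>D s b =
     (\<Sum>th\<in>UNIV. b th * lim (\<lambda>n. horizon_payoff T R \<gamma> \<sigma>A \<sigma>D n [] s th))"

definition ncirl_value where
  "ncirl_value T R \<gamma> s b =
     (SUP \<sigma>A\<in>att_strats. INF \<sigma>D\<in>def_strats. game_payoff T R \<gamma> \<sigma>A \<sigma>D s b)"

definition belief_update ::
  "('s \<Rightarrow> 't::finite \<Rightarrow> 'a \<Rightarrow> real) \<Rightarrow> 's \<Rightarrow> ('t \<Rightarrow> real) \<Rightarrow> 'a \<Rightarrow> ('t \<Rightarrow> real)" where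
  "belief_update \<pi>A s b a =
     (\<lambda>th. \<pi>A s th a * b th / (\<Sum>th'\<in>UNIV. \<pi>A s th' a * b th'))"

definition att_onestage :: "('s \<Rightarrow> 't \<Rightarrow> 'a::finite \<Rightarrow> real) set" where
  "att_onestage = {\<pi>. \<forall>s th. \<pi> s th \<in> simplex}"

definition def_onestage :: "('s \<Rightarrow> 'd::finite \<Rightarrow> real) set" where
  "def_onestage = {\<pi>. \<forall>s. \<pi> s \<in> simplex}"

definition backup ::
  "('s::finite \<Rightarrow> 'a::finite \<Rightarrow> 'd::finite \<Rightarrow> 's \<Rightarrow> real) \<Rightarrow>
   ('s \<Rightarrow> 'a \<Rightarrow> 'd \<Rightarrow> 's \<Rightarrow> 't::finite \<Rightarrow> real) \<Rightarrow> real \<Rightarrow>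
   ('s \<Rightarrow> ('t \<Rightarrow> real) \<Rightarrow> real) \<Rightarrow> ('s \<Rightarrow> ('t \<Rightarrow> real) \<Rightarrow> real)" where
  "backup T R \<gamma> v s b =
     (SUP \<pi>A\<in>att_onestage. INF \<pi>D\<in>def_onestage.
        (\<Sum>a\<in>UNIV. \<Sum>d\<in>UNIV. \<Sum>s'\<in>UNIV. \<Sum>th\<in>UNIV.
           b th * \<pi>A s th a * \<pi>D s d * T s a d s' *
           (R s a d s' th + \<gamma> * v s' (belief_update \<pi>A s b a))))"

definition bounded_vf :: "('s \<Rightarrow> ('t::finite \<Rightarrow> real) \<Rightarrow> real) \<Rightarrow> bool" where
  "bounded_vf v \<longleftrightarrow> (\<exists>B. \<forall>s. \<forall>b\<in>simplex. \<bar>v s b\<bar> \<le> B)"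

definition sup_dist ::
  "('s \<Rightarrow> ('t::finite \<Rightarrow> real) \<Rightarrow> real) \<Rightarrow> ('s \<Rightarrow> ('t \<Rightarrow> real) \<Rightarrow> real) \<Rightarrow> real" where
  "sup_dist v w = (SUP p\<in>(UNIV \<times> simplex). \<bar>v (fst p) (snd p) - w (fst p) (snd p)\<bar>)"

end

theory Submission
  imports Defs
begin

lemma simplex_nonneg: "p \<in> simplex \<Longrightarrow> 0 \<le> p x" by (simp add: simplex_def)
lemma simplex_sum: "p \<in> simplex \<Longrightarrow> sum p UNIV = 1" by (simp add: simplex_def)

lemma simplex_ex: "\<exists>p. p \<in> (simplex :: ('x::finite \<Rightarrow> real) set)"
proof -
  have c: "card (UNIV :: 'x set) > 0" by (simp add: finite_UNIV_card_ge_0)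
  show ?thesis
    by (rule exI[of _ "\<lambda>_. 1 / real (card (UNIV :: 'x set))"]) (use c in \<open>auto simp: simplex_def\<close>)
qed

lemma att_strats_ne: "(att_strats :: (('s::finite \<times> 'a::finite \<times> 'd::finite) list \<Rightarrow> 's \<Rightarrow> 't::finite \<Rightarrow> 'a \<Rightarrow> real) set) \<noteq> {}"
proof -
  obtain p :: "'a \<Rightarrow> real" where p: "p \<in> simplex" using simplex_ex by blast
  have "(\<lambda>h s th. p) \<in> (att_strats :: (('s \<times> 'a \<times> 'd) list \<Rightarrow> 's \<Rightarrow> 't \<Rightarrow> 'a \<Rightarrow> real) set)"
    unfolding att_strats_def using p by simp
  then show ?thesis by auto
qed

lemma def_strats_ne: "(def_strats :: (('s::finite \<times> 'a::finite \<times> 'd::finite) list \<Rightarrow> 's \<Rightarrow> 'd \<Rightarrow> real) set) \<noteq> {}"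
proof -
  obtain p :: "'d \<Rightarrow> real" where p: "p \<in> simplex" using simplex_ex by blast
  have "(\<lambda>h s. p) \<in> (def_strats :: (('s \<times> 'a \<times> 'd) list \<Rightarrow> 's \<Rightarrow> 'd \<Rightarrow> real) set)"
    unfolding def_strats_def using p by simp
  then show ?thesis by auto
qed

lemma att_onestage_ne: "(att_onestage :: ('s \<Rightarrow> 't \<Rightarrow> 'a::finite \<Rightarrow> real) set) \<noteq> {}"
proof -
  obtain p :: "'a \<Rightarrow> real" where p: "p \<in> simplex" using simplex_ex by blast
  have "(\<lambda>s th. p) \<in> (att_onestage :: ('s \<Rightarrow> 't \<Rightarrow> 'a \<Rightarrow> real) set)"
    unfolding att_onestage_def using p by simp
  then show ?thesis by auto
qed

lemma def_onestage_ne: "(def_onestage :: ('s \<Rightarrow> 'd::finite \<Rightarrow> real) set) \<noteq> {}"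
proof -
  obtain p :: "'d \<Rightarrow> real" where p: "p \<in> simplex" using simplex_ex by blast
  have "(\<lambda>s. p) \<in> (def_onestage :: ('s \<Rightarrow> 'd \<Rightarrow> real) set)"
    unfolding def_onestage_def using p by simp
  then show ?thesis by auto
qed

lemma R_bound:
  fixes R :: "'s::finite \<Rightarrow> 'a::finite \<Rightarrow> 'd::finite \<Rightarrow> 's \<Rightarrow> 't::finite \<Rightarrow> real"
  obtains M where "0 \<le> M" "\<And>s a d s' th. \<bar>R s a d s' th\<bar> \<le> M"
proof -
  define f where "f = (\<lambda>(s,a,d,s',th). \<bar>R s a d s' th\<bar>)"
  have "\<And>s a d s' th. \<bar>R s a d s' th\<bar> \<le> Max (range f)"
  proof -
    fix s a d s' th
    have "f (s,a,d,s',th) \<le> Max (range f)" by (rule Max_ge) auto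
    then show "\<bar>R s a d s' th\<bar> \<le> Max (range f)" by (simp add: f_def)
  qed
  moreover have "0 \<le> Max (range f)"
    by (meson abs_ge_zero calculation order_trans)
  ultimately show ?thesis using that by blast
qed

definition stage where
  "stage T R \<gamma> \<pi>A \<pi>D s b C =
     (\<Sum>a\<in>UNIV. \<Sum>d\<in>UNIV. \<Sum>s'\<in>UNIV. \<Sum>th\<in>UNIV.
           b th * \<pi>A s th a * \<pi>D s d * T s a d s' * (R s a d s' th + \<gamma> * C a d s'))"

lemma backup_stage: "backup T R \<gamma> v s b =
  (SUP \<pi>A\<in>att_onestage. INF \<pi>D\<in>def_onestage. stage T R \<gamma> \<pi>A \<pi>D s b (\<lambda>a d s'. v s' (belief_update \<pi>A s b a)))"
  by (simp add: backup_def stage_def)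

lemma weights4:
  assumes T: "\<forall>s a d. T s a d \<in> simplex" and b: "b \<in> simplex"
    and A: "\<forall>s th. \<pi>A s th \<in> simplex" and D: "\<forall>s. \<pi>D s \<in> simplex"
  shows "(\<Sum>a\<in>UNIV. \<Sum>d\<in>UNIV. \<Sum>s'\<in>UNIV. \<Sum>th\<in>UNIV.
           b th * \<pi>A s th a * \<pi>D s d * T s a d s') = 1"
proof -
  have "(\<Sum>a\<in>UNIV. \<Sum>d\<in>UNIV. \<Sum>s'\<in>UNIV. \<Sum>th\<in>UNIV. b th * \<pi>A s th a * \<pi>D s d * T s a d s')
      = (\<Sum>a\<in>UNIV. \<Sum>d\<in>UNIV. \<Sum>th\<in>UNIV. \<Sum>s'\<in>UNIV. b th * \<pi>A s th a * \<pi>D s d * T s a d s')"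
    by (intro sum.cong refl sum.swap)
  also have "\<dots> = (\<Sum>a\<in>UNIV. \<Sum>d\<in>UNIV. \<Sum>th\<in>UNIV. b th * \<pi>A s th a * \<pi>D s d)"
    using T by (simp add: sum_distrib_left[symmetric] simplex_sum)
  also have "\<dots> = (\<Sum>a\<in>UNIV. \<Sum>th\<in>UNIV. \<Sum>d\<in>UNIV. b th * \<pi>A s th a * \<pi>D s d)"
    by (intro sum.cong refl sum.swap)
  also have "\<dots> = (\<Sum>a\<in>UNIV. \<Sum>th\<in>UNIV. b th * \<pi>A s th a)"
    using D by (simp add: sum_distrib_left[symmetric] simplex_sum)
  also have "\<dots> = (\<Sum>th\<in>UNIV. \<Sum>a\<in>UNIV. b th * \<pi>A s th a)"
    by (rule sum.swap)
  also have "\<dots> = 1"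
    using A b by (simp add: sum_distrib_left[symmetric] simplex_sum)
  finally show ?thesis .
qed

lemma weights3:
  assumes T: "\<forall>s a d. T s a d \<in> simplex"
    and A: "pa \<in> simplex" and D: "pd \<in> simplex"
  shows "(\<Sum>a\<in>UNIV. \<Sum>d\<in>UNIV. \<Sum>s'\<in>UNIV. pa a * pd d * T s a d s') = 1"
  using T A D by (simp add: sum_distrib_left[symmetric] simplex_sum)

lemma pos_of_ne:
  assumes b: "b \<in> simplex" and A: "\<forall>s th. \<pi>A s th \<in> simplex"
  assumes "(\<Sum>th\<in>UNIV. b th * \<pi>A s th a) = 0"
  shows "b th * \<pi>A s th a = 0"
proof -
  have nn: "\<forall>th\<in>UNIV. 0 \<le> b th * \<pi>A s th a"
    using b A by (simp add: simplex_nonneg)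
  have "\<forall>x\<in>UNIV. b x * \<pi>A s x a = 0"
    using sum_nonneg_eq_0_iff[of UNIV "\<lambda>th. b th * \<pi>A s th a"] nn assms(3) by auto
  then show ?thesis by simp
qed

lemma stage_le:
  assumes T: "\<forall>s a d. T s a d \<in> simplex" and b: "b \<in> simplex"
    and A: "\<forall>s th. \<pi>A s th \<in> simplex" and D: "\<forall>s. \<pi>D s \<in> simplex"
    and g: "0 \<le> \<gamma>"
    and C: "\<forall>a d s'. (\<Sum>th\<in>UNIV. b th * \<pi>A s th a) \<noteq> 0 \<longrightarrow> C1 a d s' \<le> C2 a d s' + e"
  shows "stage T R \<gamma> \<pi>A \<pi>D s b C1 \<le> stage T R \<gamma> \<pi>A \<pi>D s b C2 + \<gamma> * e"
proof -
  let ?w = "\<lambda>a d s' th. b th * \<pi>A s th a * \<pi>D s d * T s a d s'"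
  have tm: "?w a d s' th * (R s a d s' th + \<gamma> * C1 a d s')
       \<le> ?w a d s' th * (R s a d s' th + \<gamma> * C2 a d s') + ?w a d s' th * (\<gamma> * e)" for a d s' th
  proof (cases "(\<Sum>th\<in>UNIV. b th * \<pi>A s th a) = 0")
    case True
    then have z0: "b th * \<pi>A s th a = 0" using pos_of_ne[OF b A] by blast
    have z: "b th * \<pi>A s th a * \<pi>D s d * T s a d s' = 0" using z0 by simp
    show ?thesis unfolding z by simp
  next
    case False
    then have "C1 a d s' \<le> C2 a d s' + e" using C by blast
    then have "\<gamma> * C1 a d s' \<le> \<gamma> * C2 a d s' + \<gamma> * e" using g
      by (metis distrib_left mult_left_mono)
    moreover have "0 \<le> ?w a d s' th" using b A D T by (simp add: simplex_nonneg)
    ultimately show ?thesis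
      by (metis (no_types, lifting) add_le_cancel_left distrib_left mult_left_mono add.assoc)
  qed
  have "stage T R \<gamma> \<pi>A \<pi>D s b C1 \<le> (\<Sum>a\<in>UNIV. \<Sum>d\<in>UNIV. \<Sum>s'\<in>UNIV. \<Sum>th\<in>UNIV.
       ?w a d s' th * (R s a d s' th + \<gamma> * C2 a d s') + ?w a d s' th * (\<gamma> * e))"
    unfolding stage_def by (intro sum_mono tm)
  also have "\<dots> = stage T R \<gamma> \<pi>A \<pi>D s b C2 + (\<Sum>a\<in>UNIV. \<Sum>d\<in>UNIV. \<Sum>s'\<in>UNIV. \<Sum>th\<in>UNIV. ?w a d s' th) * (\<gamma> * e)"
    unfolding stage_def by (simp add: sum.distrib sum_distrib_right)
  also have "\<dots> = stage T R \<gamma> \<pi>A \<pi>D s b C2 + \<gamma> * e"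
    using weights4[OF T b A D] by simp
  finally show ?thesis .
qed

lemma stage_zero_bound:
  assumes T: "\<forall>s a d. T s a d \<in> simplex" and b: "b \<in> simplex"
    and A: "\<forall>s th. \<pi>A s th \<in> simplex" and D: "\<forall>s. \<pi>D s \<in> simplex"
    and M: "\<And>s a d s' th. \<bar>R s a d s' th\<bar> \<le> M"
  shows "\<bar>stage T R \<gamma> \<pi>A \<pi>D s b (\<lambda>a d s'. 0)\<bar> \<le> M"
proof -
  let ?w = "\<lambda>a d s' th. b th * \<pi>A s th a * \<pi>D s d * T s a d s'"
  have w0: "0 \<le> ?w a d s' th" for a d s' th using b A D T by (simp add: simplex_nonneg)
  have "stage T R \<gamma> \<pi>A \<pi>D s b (\<lambda>a d s'. 0) = (\<Sum>a\<in>UNIV. \<Sum>d\<in>UNIV. \<Sum>s'\<in>UNIV. \<Sum>th\<in>UNIV. ?w a d s' th * R s a d s' th)"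
    unfolding stage_def by simp
  moreover have "(\<Sum>a\<in>UNIV. \<Sum>d\<in>UNIV. \<Sum>s'\<in>UNIV. \<Sum>th\<in>UNIV. ?w a d s' th * R s a d s' th)
     \<le> (\<Sum>a\<in>UNIV. \<Sum>d\<in>UNIV. \<Sum>s'\<in>UNIV. \<Sum>th\<in>UNIV. ?w a d s' th * M)"
    apply (intro sum_mono mult_left_mono w0)
    subgoal for a d s' th using abs_le_D1[OF M[of s a d s' th]] by simp
    done
  moreover have "(\<Sum>a\<in>UNIV. \<Sum>d\<in>UNIV. \<Sum>s'\<in>UNIV. \<Sum>th\<in>UNIV. ?w a d s' th * (-M))
     \<le> (\<Sum>a\<in>UNIV. \<Sum>d\<in>UNIV. \<Sum>s'\<in>UNIV. \<Sum>th\<in>UNIV. ?w a d s' th * R s a d s' th)"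
    apply (intro sum_mono mult_left_mono w0)
    subgoal for a d s' th using abs_le_D2[OF M[of s a d s' th]] by linarith
    done
  moreover have "(\<Sum>a\<in>UNIV. \<Sum>d\<in>UNIV. \<Sum>s'\<in>UNIV. \<Sum>th\<in>UNIV. ?w a d s' th * c) = c" for c
    using weights4[OF T b A D] by (simp add: sum_distrib_right[symmetric])
  ultimately show ?thesis unfolding abs_le_iff by (metis minus_le_iff)
qed

lemma stage_bound:
  assumes T: "\<forall>s a d. T s a d \<in> simplex" and b: "b \<in> simplex"
    and A: "\<forall>s th. \<pi>A s th \<in> simplex" and D: "\<forall>s. \<pi>D s \<in> simplex"
    and M: "\<And>s a d s' th. \<bar>R s a d s' th\<bar> \<le> M" and g: "0 \<le> \<gamma>"
    and C: "\<forall>a d s'. (\<Sum>th\<in>UNIV. b th * \<pi>A s th a) \<noteq> 0 \<longrightarrow> \<bar>C a d s'\<bar> \<le> B"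
  shows "\<bar>stage T R \<gamma> \<pi>A \<pi>D s b C\<bar> \<le> M + \<gamma> * B"
proof -
  have 1: "stage T R \<gamma> \<pi>A \<pi>D s b C \<le> stage T R \<gamma> \<pi>A \<pi>D s b (\<lambda>a d s'. 0) + \<gamma> * B"
    apply (rule stage_le[OF T b A D g], intro allI impI)
    subgoal for a d s' using C[rule_format, of a d s'] by (simp add: abs_le_iff)
    done
  have 2: "stage T R \<gamma> \<pi>A \<pi>D s b (\<lambda>a d s'. 0) \<le> stage T R \<gamma> \<pi>A \<pi>D s b C + \<gamma> * B"
    apply (rule stage_le[OF T b A D g], intro allI impI)
    subgoal for a d s' using C[rule_format, of a d s'] by (simp add: abs_le_iff)
    done
  have z: "\<bar>stage T R \<gamma> \<pi>A \<pi>D s b (\<lambda>a d s'. 0)\<bar> \<le> M"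
    by (rule stage_zero_bound[OF T b A D]) (rule M)
  show ?thesis using 1 2 z by (simp add: abs_le_iff)
qed

lemma stage_diff:
  assumes T: "\<forall>s a d. T s a d \<in> simplex" and b: "b \<in> simplex"
    and A: "\<forall>s th. \<pi>A s th \<in> simplex" and D: "\<forall>s. \<pi>D s \<in> simplex"
    and g: "0 \<le> \<gamma>"
    and C: "\<forall>a d s'. (\<Sum>th\<in>UNIV. b th * \<pi>A s th a) \<noteq> 0 \<longrightarrow> \<bar>C1 a d s' - C2 a d s'\<bar> \<le> e"
  shows "\<bar>stage T R \<gamma> \<pi>A \<pi>D s b C1 - stage T R \<gamma> \<pi>A \<pi>D s b C2\<bar> \<le> \<gamma> * e"
proof -
  have 1: "stage T R \<gamma> \<pi>A \<pi>D s b C1 \<le> stage T R \<gamma> \<pi>A \<pi>D s b C2 + \<gamma> * e"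
    apply (rule stage_le[OF T b A D g], intro allI impI)
    subgoal for a d s' using C[rule_format, of a d s'] by (simp add: abs_le_iff)
    done
  have 2: "stage T R \<gamma> \<pi>A \<pi>D s b C2 \<le> stage T R \<gamma> \<pi>A \<pi>D s b C1 + \<gamma> * e"
    apply (rule stage_le[OF T b A D g], intro allI impI)
    subgoal for a d s' using C[rule_format, of a d s'] by (simp add: abs_le_iff)
    done
  show ?thesis using 1 2 by (simp add: abs_le_iff)
qed

lemma tau_simplex:
  assumes b: "b \<in> simplex" and A: "\<forall>s th. \<pi>A s th \<in> simplex"
    and p: "(\<Sum>th\<in>UNIV. b th * \<pi>A s th a) \<noteq> 0"
  shows "belief_update \<pi>A s b a \<in> simplex"
proof -
  let ?p = "(\<Sum>th\<in>UNIV. b th * \<pi>A s th a)"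
  have "0 \<le> ?p" using b A by (simp add: simplex_nonneg sum_nonneg)
  then have pp: "0 < ?p" using p by simp
  have nA: "\<forall>s th a. 0 \<le> \<pi>A s th a" using A simplex_nonneg by blast
  have nb: "\<forall>th. 0 \<le> b th" using b simplex_nonneg by blast
  have "\<forall>th. 0 \<le> belief_update \<pi>A s b a th"
    unfolding belief_update_def by (auto intro!: divide_nonneg_nonneg sum_nonneg mult_nonneg_nonneg simp: nA nb)
  moreover have "sum (belief_update \<pi>A s b a) UNIV = 1"
    unfolding belief_update_def using pp
    by (simp add: sum_divide_distrib[symmetric] mult.commute)
  ultimately show ?thesis by (simp add: simplex_def)
qed

lemma bu_id:
  assumes b: "b \<in> simplex" and A: "\<forall>s th. \<pi>A s th \<in> simplex"
  shows "(\<Sum>th\<in>UNIV. b th * \<pi>A s th a) * (\<Sum>th'\<in>UNIV. belief_update \<pi>A s b a th' * X th')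
       = (\<Sum>th\<in>UNIV. b th * \<pi>A s th a * X th)"
proof (cases "(\<Sum>th\<in>UNIV. b th * \<pi>A s th a) = 0")
  case True
  then have "\<forall>th. b th * \<pi>A s th a = 0" using pos_of_ne[OF b A] by blast
  then have "\<forall>th. b th * \<pi>A s th a * X th = 0" by simp
  then show ?thesis using True by (simp add: sum.neutral)
next
  case False
  show ?thesis unfolding belief_update_def
    using False by (simp add: sum_divide_distrib[symmetric] mult.commute mult.left_commute)
qed

lemma stage_term_aux:
  "(\<Sum>th\<in>UNIV. w th * k1 * k2 * (r th + \<gamma> * (C::real)))
     = (\<Sum>th\<in>UNIV. w th * k1 * k2 * r th) + \<gamma> * k1 * k2 * ((\<Sum>th\<in>UNIV. w th) * C)"
proof -
  have "(\<Sum>th\<in>UNIV. w th * k1 * k2 * (r th + \<gamma> * (C::real)))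
      = (\<Sum>th\<in>UNIV. w th * k1 * k2 * r th + (\<gamma> * k1 * k2 * C) * w th)"
    by (rule sum.cong) (simp_all add: algebra_simps)
  also have "\<dots> = (\<Sum>th\<in>UNIV. w th * k1 * k2 * r th) + (\<gamma> * k1 * k2 * C) * (\<Sum>th\<in>UNIV. w th)"
    by (simp only: sum.distrib sum_distrib_left)
  finally show ?thesis by (simp only: mult_ac)
qed

lemma stage_term_aux2:
  "(\<Sum>th\<in>UNIV. w th * k1 * k2 * (r th + \<gamma> * (X th::real)))
     = (\<Sum>th\<in>UNIV. w th * k1 * k2 * r th) + \<gamma> * k1 * k2 * (\<Sum>th\<in>UNIV. w th * X th)"
proof -
  have "(\<Sum>th\<in>UNIV. w th * k1 * k2 * (r th + \<gamma> * X th))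
      = (\<Sum>th\<in>UNIV. w th * k1 * k2 * r th + (\<gamma> * k1 * k2) * (w th * X th))"
    by (rule sum.cong) (simp_all add: algebra_simps)
  also have "\<dots> = (\<Sum>th\<in>UNIV. w th * k1 * k2 * r th) + (\<gamma> * k1 * k2) * (\<Sum>th\<in>UNIV. w th * X th)"
    by (simp only: sum.distrib sum_distrib_left)
  finally show ?thesis .
qed

lemma stage_term:
  assumes b: "b \<in> simplex" and A: "\<forall>s th. \<pi>A s th \<in> simplex"
  shows "(\<Sum>th\<in>UNIV. b th * \<pi>A s th a * k1 * k2 * (r th + \<gamma> * (\<Sum>th'\<in>UNIV. belief_update \<pi>A s b a th' * X th')))
       = (\<Sum>th\<in>UNIV. b th * \<pi>A s th a * k1 * k2 * (r th + \<gamma> * X th))"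
proof -
  let ?C = "(\<Sum>th'\<in>UNIV. belief_update \<pi>A s b a th' * X th')"
  have "(\<Sum>th\<in>UNIV. b th * \<pi>A s th a * k1 * k2 * (r th + \<gamma> * ?C))
     = (\<Sum>th\<in>UNIV. b th * \<pi>A s th a * k1 * k2 * r th) + \<gamma> * k1 * k2 * ((\<Sum>th\<in>UNIV. b th * \<pi>A s th a) * ?C)"
    by (rule stage_term_aux)
  also have "\<dots> = (\<Sum>th\<in>UNIV. b th * \<pi>A s th a * k1 * k2 * r th) + \<gamma> * k1 * k2 * (\<Sum>th\<in>UNIV. b th * \<pi>A s th a * X th)"
    using bu_id[OF b A] by simp
  also have "\<dots> = (\<Sum>th\<in>UNIV. b th * \<pi>A s th a * k1 * k2 * (r th + \<gamma> * X th))"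
    by (rule stage_term_aux2[symmetric])
  finally show ?thesis .
qed

lemma wavg3:
  assumes T: "\<forall>s a d. T s a d \<in> simplex" and A: "pa \<in> simplex" and D: "pd \<in> simplex"
    and f: "\<And>a d s'. \<bar>f a d s'\<bar> \<le> c"
  shows "\<bar>\<Sum>a\<in>UNIV. \<Sum>d\<in>UNIV. \<Sum>s'\<in>UNIV. pa a * pd d * T s a d s' * f a d s'\<bar> \<le> (c::real)"
proof -
  have w0: "0 \<le> pa a * pd d * T s a d s'" for a d s' using A D T by (simp add: simplex_nonneg)
  have up: "(\<Sum>a\<in>UNIV. \<Sum>d\<in>UNIV. \<Sum>s'\<in>UNIV. pa a * pd d * T s a d s' * f a d s')
     \<le> (\<Sum>a\<in>UNIV. \<Sum>d\<in>UNIV. \<Sum>s'\<in>UNIV. pa a * pd d * T s a d s' * c)"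
    apply (intro sum_mono mult_left_mono w0)
    subgoal for a d s' using abs_le_D1[OF f[of a d s']] by simp
    done
  have lo: "(\<Sum>a\<in>UNIV. \<Sum>d\<in>UNIV. \<Sum>s'\<in>UNIV. pa a * pd d * T s a d s' * (-c))
     \<le> (\<Sum>a\<in>UNIV. \<Sum>d\<in>UNIV. \<Sum>s'\<in>UNIV. pa a * pd d * T s a d s' * f a d s')"
    apply (intro sum_mono mult_left_mono w0)
    subgoal for a d s' using abs_le_D2[OF f[of a d s']] by linarith
    done
  have eq: "(\<Sum>a\<in>UNIV. \<Sum>d\<in>UNIV. \<Sum>s'\<in>UNIV. pa a * pd d * T s a d s' * x) = x" for x
    using weights3[OF T A D, of s] by (simp add: sum_distrib_right[symmetric])
  show ?thesis using up lo eq[of c] eq[of "-c"] unfolding abs_le_iff by linarith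
qed

lemma strat_simplexA: "\<sigma>A \<in> att_strats \<Longrightarrow> \<sigma>A h s th \<in> simplex"
  by (simp add: att_strats_def)
lemma strat_simplexD: "\<sigma>D \<in> def_strats \<Longrightarrow> \<sigma>D h s \<in> simplex"
  by (simp add: def_strats_def)

lemma hp_bound:
  assumes T: "\<forall>s a d. T s a d \<in> simplex" and A: "\<sigma>A \<in> att_strats" and D: "\<sigma>D \<in> def_strats"
    and M: "\<And>s a d s' th. \<bar>R s a d s' th\<bar> \<le> M" and M0: "0 \<le> M"
    and g0: "0 \<le> \<gamma>" and g1: "\<gamma> < 1"
  shows "\<bar>horizon_payoff T R \<gamma> \<sigma>A \<sigma>D n h s th\<bar> \<le> M / (1 - \<gamma>)"
proof (induction n arbitrary: h s)
  case 0
  then show ?case using M0 g1 by simp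
next
  case (Suc n)
  have K: "M + \<gamma> * (M / (1 - \<gamma>)) = M / (1 - \<gamma>)" using g1 by (simp add: field_simps)
  have "\<bar>R s a d s' th + \<gamma> * horizon_payoff T R \<gamma> \<sigma>A \<sigma>D n (h @ [(s, a, d)]) s' th\<bar> \<le> M / (1 - \<gamma>)" for a d s'
  proof -
    have "\<bar>\<gamma> * horizon_payoff T R \<gamma> \<sigma>A \<sigma>D n (h @ [(s, a, d)]) s' th\<bar> \<le> \<gamma> * (M / (1 - \<gamma>))"
      unfolding abs_mult abs_of_nonneg[OF g0] by (rule mult_left_mono[OF Suc.IH g0])
    then show ?thesis using M[of s a d s' th] K by linarith
  qed
  then show ?case
    by (simp only: horizon_payoff.simps) (rule wavg3[OF T strat_simplexA[OF A] strat_simplexD[OF D]])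
qed

lemma hp_diff:
  assumes T: "\<forall>s a d. T s a d \<in> simplex" and A: "\<sigma>A \<in> att_strats" and D: "\<sigma>D \<in> def_strats"
    and M: "\<And>s a d s' th. \<bar>R s a d s' th\<bar> \<le> M"
    and g0: "0 \<le> \<gamma>"
  shows "\<bar>horizon_payoff T R \<gamma> \<sigma>A \<sigma>D (Suc n) h s th - horizon_payoff T R \<gamma> \<sigma>A \<sigma>D n h s th\<bar> \<le> M * \<gamma> ^ n"
proof (induction n arbitrary: h s)
  case 0
  have "\<bar>horizon_payoff T R \<gamma> \<sigma>A \<sigma>D (Suc 0) h s th\<bar> \<le> M"
    by (simp only: horizon_payoff.simps)
       (rule wavg3[OF T strat_simplexA[OF A] strat_simplexD[OF D]], simp add: M)
  then show ?case by simp
next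
  case (Suc n)
  let ?H = "horizon_payoff T R \<gamma> \<sigma>A \<sigma>D"
  have eq: "?H (Suc (Suc n)) h s th - ?H (Suc n) h s th =
     (\<Sum>a\<in>UNIV. \<Sum>d\<in>UNIV. \<Sum>s'\<in>UNIV. \<sigma>A h s th a * \<sigma>D h s d * T s a d s' *
        (\<gamma> * (?H (Suc n) (h @ [(s, a, d)]) s' th - ?H n (h @ [(s, a, d)]) s' th)))"
    unfolding horizon_payoff.simps(2)[of _ _ _ _ _ "Suc n"] horizon_payoff.simps(2)[of _ _ _ _ _ n]
    unfolding sum_subtractf[symmetric] by (intro sum.cong refl) (simp add: algebra_simps)
  have "\<bar>\<gamma> * (?H (Suc n) (h @ [(s, a, d)]) s' th - ?H n (h @ [(s, a, d)]) s' th)\<bar> \<le> M * \<gamma> ^ Suc n" for a d s'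
  proof -
    have "\<gamma> * \<bar>?H (Suc n) (h @ [(s, a, d)]) s' th - ?H n (h @ [(s, a, d)]) s' th\<bar> \<le> \<gamma> * (M * \<gamma> ^ n)"
      by (rule mult_left_mono[OF Suc.IH g0])
    then show ?thesis unfolding abs_mult abs_of_nonneg[OF g0] by (simp add: mult_ac)
  qed
  then show ?case unfolding eq
    by (rule wavg3[OF T strat_simplexA[OF A] strat_simplexD[OF D]])
qed

definition pay where
  "pay T R \<gamma> \<sigma>A \<sigma>D h s th = lim (\<lambda>n. horizon_payoff T R \<gamma> \<sigma>A \<sigma>D n h s th)"

lemma hp_tendsto:
  assumes T: "\<forall>s a d. T s a d \<in> simplex" and A: "\<sigma>A \<in> att_strats" and D: "\<sigma>D \<in> def_strats"
    and M: "\<And>s a d s' th. \<bar>R s a d s' th\<bar> \<le> M"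
    and g0: "0 \<le> \<gamma>" and g1: "\<gamma> < 1"
  shows "(\<lambda>n. horizon_payoff T R \<gamma> \<sigma>A \<sigma>D n h s th) \<longlonglongrightarrow> pay T R \<gamma> \<sigma>A \<sigma>D h s th"
proof -
  let ?H = "\<lambda>n. horizon_payoff T R \<gamma> \<sigma>A \<sigma>D n h s th"
  let ?f = "\<lambda>k. ?H (Suc k) - ?H k"
  have "summable (\<lambda>n. M * \<gamma> ^ n)"
    using g0 g1 by (intro summable_mult summable_geometric) simp
  then have "summable ?f"
    by (rule summable_comparison_test') (use hp_diff[OF T A D M g0] in simp)
  then have "(\<lambda>n. \<Sum>i<n. ?f i) \<longlonglongrightarrow> suminf ?f" by (rule summable_LIMSEQ)
  moreover have "(\<Sum>i<n. ?f i) = ?H n" for n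
    by (subst sum_lessThan_telescope) simp
  ultimately have "?H \<longlonglongrightarrow> suminf ?f" by simp
  then have "convergent ?H" by (rule convergentI)
  then show ?thesis unfolding pay_def by (simp add: convergent_LIMSEQ_iff)
qed

lemma pay_bound:
  assumes T: "\<forall>s a d. T s a d \<in> simplex" and A: "\<sigma>A \<in> att_strats" and D: "\<sigma>D \<in> def_strats"
    and M: "\<And>s a d s' th. \<bar>R s a d s' th\<bar> \<le> M" and M0: "0 \<le> M"
    and g0: "0 \<le> \<gamma>" and g1: "\<gamma> < 1"
  shows "\<bar>pay T R \<gamma> \<sigma>A \<sigma>D h s th\<bar> \<le> M / (1 - \<gamma>)"
proof -
  have "(\<lambda>n. \<bar>horizon_payoff T R \<gamma> \<sigma>A \<sigma>D n h s th\<bar>) \<longlonglongrightarrow> \<bar>pay T R \<gamma> \<sigma>A \<sigma>D h s th\<bar>"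
    by (rule tendsto_rabs) (rule hp_tendsto[OF T A D M g0 g1])
  then show ?thesis
    by (rule LIMSEQ_le_const2) (use hp_bound[OF T A D M M0 g0 g1] in auto)
qed

lemma pay_rec:
  assumes T: "\<forall>s a d. T s a d \<in> simplex" and A: "\<sigma>A \<in> att_strats" and D: "\<sigma>D \<in> def_strats"
    and M: "\<And>s a d s' th. \<bar>R s a d s' th\<bar> \<le> M"
    and g0: "0 \<le> \<gamma>" and g1: "\<gamma> < 1"
  shows "pay T R \<gamma> \<sigma>A \<sigma>D h s th = (\<Sum>a\<in>UNIV. \<Sum>d\<in>UNIV. \<Sum>s'\<in>UNIV.
        \<sigma>A h s th a * \<sigma>D h s d * T s a d s' *
        (R s a d s' th + \<gamma> * pay T R \<gamma> \<sigma>A \<sigma>D (h @ [(s, a, d)]) s' th))"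
proof -
  note lim = hp_tendsto[OF T A D M g0 g1]
  have 1: "(\<lambda>n. horizon_payoff T R \<gamma> \<sigma>A \<sigma>D (Suc n) h s th) \<longlonglongrightarrow> pay T R \<gamma> \<sigma>A \<sigma>D h s th"
    using lim by (rule LIMSEQ_Suc)
  have 2: "(\<lambda>n. horizon_payoff T R \<gamma> \<sigma>A \<sigma>D (Suc n) h s th) \<longlonglongrightarrow> (\<Sum>a\<in>UNIV. \<Sum>d\<in>UNIV. \<Sum>s'\<in>UNIV.
        \<sigma>A h s th a * \<sigma>D h s d * T s a d s' *
        (R s a d s' th + \<gamma> * pay T R \<gamma> \<sigma>A \<sigma>D (h @ [(s, a, d)]) s' th))"
    unfolding horizon_payoff.simps
    by (intro tendsto_sum tendsto_mult tendsto_add tendsto_const lim)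
  show ?thesis using 1 2 by (rule LIMSEQ_unique)
qed

definition shiftS where "shiftS x \<sigma> = (\<lambda>h. \<sigma> (x # h))"

lemma hp_shift:
  "horizon_payoff T R \<gamma> \<sigma>A \<sigma>D n (x # h) s th = horizon_payoff T R \<gamma> (shiftS x \<sigma>A) (shiftS x \<sigma>D) n h s th"
  by (induction n arbitrary: h s) (simp_all add: shiftS_def)

lemma pay_shift:
  "pay T R \<gamma> \<sigma>A \<sigma>D (x # h) s th = pay T R \<gamma> (shiftS x \<sigma>A) (shiftS x \<sigma>D) h s th"
  by (simp add: pay_def hp_shift)

lemma shiftA_mem: "\<sigma> \<in> att_strats \<Longrightarrow> shiftS x \<sigma> \<in> att_strats"
  by (simp add: att_strats_def shiftS_def)
lemma shiftD_mem: "\<sigma> \<in> def_strats \<Longrightarrow> shiftS x \<sigma> \<in> def_strats"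
  by (simp add: def_strats_def shiftS_def)
lemma rootA_mem: "\<sigma> \<in> att_strats \<Longrightarrow> \<sigma> [] \<in> att_onestage"
  by (simp add: att_strats_def att_onestage_def)
lemma rootD_mem: "\<sigma> \<in> def_strats \<Longrightarrow> \<sigma> [] \<in> def_onestage"
  by (simp add: def_strats_def def_onestage_def)

lemma hp_loc:
  assumes "\<forall>ext x. (ext = [] \<longrightarrow> x = s) \<longrightarrow> (ext \<noteq> [] \<longrightarrow> fst (hd ext) = s) \<longrightarrow>
      \<sigma>A1 (h @ ext) x = \<sigma>A2 (h @ ext) x \<and> \<sigma>D1 (h @ ext) x = \<sigma>D2 (h @ ext) x"
  shows "horizon_payoff T R \<gamma> \<sigma>A1 \<sigma>D1 n h s th = horizon_payoff T R \<gamma> \<sigma>A2 \<sigma>D2 n h s th"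
  using assms
proof (induction n arbitrary: h s)
  case 0
  then show ?case by simp
next
  case (Suc n)
  have r: "\<sigma>A1 h s = \<sigma>A2 h s" "\<sigma>D1 h s = \<sigma>D2 h s"
    using Suc.prems[rule_format, of "[]" s] by simp_all
  have i: "horizon_payoff T R \<gamma> \<sigma>A1 \<sigma>D1 n (h @ [(s, a, d)]) s' th = horizon_payoff T R \<gamma> \<sigma>A2 \<sigma>D2 n (h @ [(s, a, d)]) s' th"
    for a d s'
  proof (rule Suc.IH, intro allI impI)
    fix ext :: "('a \<times> 'b \<times> 'c) list" and x
    show "\<sigma>A1 ((h @ [(s, a, d)]) @ ext) x = \<sigma>A2 ((h @ [(s, a, d)]) @ ext) x \<and>
          \<sigma>D1 ((h @ [(s, a, d)]) @ ext) x = \<sigma>D2 ((h @ [(s, a, d)]) @ ext) x"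
      using Suc.prems[rule_format, of "(s, a, d) # ext" x] by simp
  qed
  show ?case by (simp add: r i)
qed

lemma gp_pay: "game_payoff T R \<gamma> \<sigma>A \<sigma>D s b = (\<Sum>th\<in>UNIV. b th * pay T R \<gamma> \<sigma>A \<sigma>D [] s th)"
  by (simp add: game_payoff_def pay_def)

lemma gp_loc:
  assumes "\<forall>ext x. (ext = [] \<longrightarrow> x = s) \<longrightarrow> (ext \<noteq> [] \<longrightarrow> fst (hd ext) = s) \<longrightarrow>
      \<sigma>A1 ext x = \<sigma>A2 ext x \<and> \<sigma>D1 ext x = \<sigma>D2 ext x"
  shows "game_payoff T R \<gamma> \<sigma>A1 \<sigma>D1 s b = game_payoff T R \<gamma> \<sigma>A2 \<sigma>D2 s b"
proof -
  have "horizon_payoff T R \<gamma> \<sigma>A1 \<sigma>D1 n [] s th = horizon_payoff T R \<gamma> \<sigma>A2 \<sigma>D2 n [] s th" for n th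
    by (rule hp_loc) (use assms in simp)
  then show ?thesis by (simp add: game_payoff_def)
qed

definition glue :: "('s \<Rightarrow> 'z) \<Rightarrow> ('a \<Rightarrow> 'd \<Rightarrow> 's \<Rightarrow> (('s \<times> 'a \<times> 'd) list \<Rightarrow> 's \<Rightarrow> 'z)) \<Rightarrow> ('s \<times> 'a \<times> 'd) list \<Rightarrow> 's \<Rightarrow> 'z" where
  "glue \<pi> c h x = (case h of [] \<Rightarrow> \<pi> x
      | y # h' \<Rightarrow> c (fst (snd y)) (snd (snd y)) (if h' = [] then x else fst (hd h')) h' x)"

lemma glue_nil: "glue \<pi> c [] = \<pi>"
  by (rule ext) (simp add: glue_def)

lemma glue_loc: "\<forall>ext x. (ext = [] \<longrightarrow> x = s') \<longrightarrow> (ext \<noteq> [] \<longrightarrow> fst (hd ext) = s') \<longrightarrow>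
      shiftS (s, a, d) (glue \<pi> c) ext x = c a d s' ext x"
  by (auto simp: shiftS_def glue_def)

lemma glueA_mem: "\<pi> \<in> att_onestage \<Longrightarrow> \<forall>a d s'. c a d s' \<in> att_strats \<Longrightarrow> glue \<pi> c \<in> att_strats"
  by (auto simp: att_strats_def att_onestage_def glue_def split: list.split)

lemma glueD_mem: "\<pi> \<in> def_onestage \<Longrightarrow> \<forall>a d s'. c a d s' \<in> def_strats \<Longrightarrow> glue \<pi> c \<in> def_strats"
  by (auto simp: def_strats_def def_onestage_def glue_def split: list.split)

lemma swap4:
  "(\<Sum>th\<in>UNIV. \<Sum>a\<in>UNIV. \<Sum>d\<in>UNIV. \<Sum>s'\<in>UNIV. F th a d s') =
   (\<Sum>a\<in>UNIV. \<Sum>d\<in>UNIV. \<Sum>s'\<in>UNIV. \<Sum>th\<in>UNIV. (F th a d s' :: real))"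
proof -
  have "(\<Sum>th\<in>UNIV. \<Sum>a\<in>UNIV. \<Sum>d\<in>UNIV. \<Sum>s'\<in>UNIV. F th a d s') =
        (\<Sum>a\<in>UNIV. \<Sum>th\<in>UNIV. \<Sum>d\<in>UNIV. \<Sum>s'\<in>UNIV. F th a d s')"
    by (rule sum.swap)
  also have "\<dots> = (\<Sum>a\<in>UNIV. \<Sum>d\<in>UNIV. \<Sum>th\<in>UNIV. \<Sum>s'\<in>UNIV. F th a d s')"
    by (rule sum.cong[OF refl], rule sum.swap)
  also have "\<dots> = (\<Sum>a\<in>UNIV. \<Sum>d\<in>UNIV. \<Sum>s'\<in>UNIV. \<Sum>th\<in>UNIV. F th a d s')"
    by (rule sum.cong[OF refl], rule sum.cong[OF refl], rule sum.swap)
  finally show ?thesis .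
qed

lemma dec:
  assumes T: "\<forall>s a d. T s a d \<in> simplex" and b: "b \<in> simplex"
    and A: "\<sigma>A \<in> att_strats" and D: "\<sigma>D \<in> def_strats"
    and M: "\<And>s a d s' th. \<bar>R s a d s' th\<bar> \<le> M"
    and g0: "0 \<le> \<gamma>" and g1: "\<gamma> < 1"
  shows "game_payoff T R \<gamma> \<sigma>A \<sigma>D s b = stage T R \<gamma> (\<sigma>A []) (\<sigma>D []) s b
     (\<lambda>a d s'. game_payoff T R \<gamma> (shiftS (s, a, d) \<sigma>A) (shiftS (s, a, d) \<sigma>D) s' (belief_update (\<sigma>A []) s b a))"
proof -
  define P where "P a d s' th = pay T R \<gamma> (shiftS (s, a, d) \<sigma>A) (shiftS (s, a, d) \<sigma>D) [] s' th" for a d s' th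
  have Ar: "\<forall>s th. \<sigma>A [] s th \<in> simplex" using A by (simp add: att_strats_def)
  have pr: "pay T R \<gamma> \<sigma>A \<sigma>D [] s th = (\<Sum>a\<in>UNIV. \<Sum>d\<in>UNIV. \<Sum>s'\<in>UNIV.
        \<sigma>A [] s th a * \<sigma>D [] s d * T s a d s' * (R s a d s' th + \<gamma> * P a d s' th))" for th
    using pay_rec[OF T A D M g0 g1, where h="[]" and s=s and th=th] by (simp add: pay_shift P_def)
  have "game_payoff T R \<gamma> \<sigma>A \<sigma>D s b = (\<Sum>th\<in>UNIV. b th * (\<Sum>a\<in>UNIV. \<Sum>d\<in>UNIV. \<Sum>s'\<in>UNIV.
        \<sigma>A [] s th a * \<sigma>D [] s d * T s a d s' * (R s a d s' th + \<gamma> * P a d s' th)))"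
    by (simp only: gp_pay pr)
  also have "\<dots> = (\<Sum>th\<in>UNIV. \<Sum>a\<in>UNIV. \<Sum>d\<in>UNIV. \<Sum>s'\<in>UNIV.
        b th * \<sigma>A [] s th a * \<sigma>D [] s d * T s a d s' * (R s a d s' th + \<gamma> * P a d s' th))"
    by (simp only: sum_distrib_left mult.assoc)
  also have "\<dots> = (\<Sum>a\<in>UNIV. \<Sum>d\<in>UNIV. \<Sum>s'\<in>UNIV. \<Sum>th\<in>UNIV.
        b th * \<sigma>A [] s th a * \<sigma>D [] s d * T s a d s' * (R s a d s' th + \<gamma> * P a d s' th))"
    by (rule swap4)
  also have "\<dots> = stage T R \<gamma> (\<sigma>A []) (\<sigma>D []) s b
     (\<lambda>a d s'. game_payoff T R \<gamma> (shiftS (s, a, d) \<sigma>A) (shiftS (s, a, d) \<sigma>D) s' (belief_update (\<sigma>A []) s b a))"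
    unfolding stage_def gp_pay P_def[symmetric]
    apply (rule sum.cong[OF refl], rule sum.cong[OF refl], rule sum.cong[OF refl])
    apply (rule stage_term[OF b Ar, symmetric])
    done
  finally show ?thesis .
qed

lemma wavg1:
  assumes p: "p \<in> simplex" and f: "\<And>x. \<bar>f x\<bar> \<le> c"
  shows "\<bar>\<Sum>x\<in>UNIV. p x * f x\<bar> \<le> (c::real)"
proof -
  have "\<bar>\<Sum>x\<in>UNIV. p x * f x\<bar> \<le> (\<Sum>x\<in>UNIV. \<bar>p x * f x\<bar>)" by (rule sum_abs)
  also have "\<dots> \<le> (\<Sum>x\<in>UNIV. p x * c)"
    by (intro sum_mono) (simp add: abs_mult abs_of_nonneg[OF simplex_nonneg[OF p]] mult_left_mono[OF f simplex_nonneg[OF p]])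
  also have "\<dots> = c" using simplex_sum[OF p] by (simp add: sum_distrib_right[symmetric])
  finally show ?thesis .
qed

lemma gp_bound:
  assumes T: "\<forall>s a d. T s a d \<in> simplex"
    and M: "\<And>s a d s' th. \<bar>R s a d s' th\<bar> \<le> M" and M0: "0 \<le> M"
    and g0: "0 \<le> \<gamma>" and g1: "\<gamma> < 1" and b: "b \<in> simplex"
    and A: "\<sigma>A \<in> att_strats" and D: "\<sigma>D \<in> def_strats"
  shows "\<bar>game_payoff T R \<gamma> \<sigma>A \<sigma>D s b\<bar> \<le> M / (1 - \<gamma>)"
  unfolding gp_pay by (rule wavg1[OF b pay_bound[OF T A D M M0 g0 g1]])

lemma inf_abs:
  assumes "B \<noteq> {}" "\<And>y. y \<in> B \<Longrightarrow> \<bar>f y\<bar> \<le> (c::real)"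
  shows "\<bar>INF y\<in>B. f y\<bar> \<le> c" "bdd_below (f ` B)" "bdd_above (f ` B)"
proof -
  show bb: "bdd_below (f ` B)" by (rule bdd_belowI2[of _ "-c"]) (metis assms(2) abs_le_D2 minus_le_iff)
  show "bdd_above (f ` B)" by (rule bdd_aboveI2[of _ _ c]) (use assms(2) in \<open>simp add: abs_le_iff\<close>)
  obtain y where y: "y \<in> B" using assms(1) by blast
  have "(INF y\<in>B. f y) \<le> f y" by (rule cINF_lower[OF bb y])
  moreover have "-c \<le> (INF y\<in>B. f y)" by (rule cINF_greatest[OF assms(1)]) (metis assms(2) abs_le_D2 minus_le_iff)
  ultimately show "\<bar>INF y\<in>B. f y\<bar> \<le> c" using assms(2)[OF y] by (simp add: abs_le_iff)
qed

lemma sup_abs: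
  assumes "B \<noteq> {}" "\<And>y. y \<in> B \<Longrightarrow> \<bar>f y\<bar> \<le> (c::real)"
  shows "\<bar>SUP y\<in>B. f y\<bar> \<le> c"
proof -
  have ba: "bdd_above (f ` B)" by (rule bdd_aboveI2[of _ _ c]) (use assms(2) in \<open>simp add: abs_le_iff\<close>)
  obtain y where y: "y \<in> B" using assms(1) by blast
  have "f y \<le> (SUP y\<in>B. f y)" by (rule cSUP_upper[OF y ba])
  moreover have "(SUP y\<in>B. f y) \<le> c" by (rule cSUP_least[OF assms(1)]) (use assms(2) in \<open>simp add: abs_le_iff\<close>)
  ultimately show ?thesis using assms(2)[OF y] by (simp add: abs_le_iff)
qed

lemma V_bound:
  assumes T: "\<forall>s a d. T s a d \<in> simplex"
    and M: "\<And>s a d s' th. \<bar>R s a d s' th\<bar> \<le> M" and M0: "0 \<le> M"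
    and g0: "0 \<le> \<gamma>" and g1: "\<gamma> < 1" and b: "b \<in> simplex"
  shows "\<bar>ncirl_value T R \<gamma> s b\<bar> \<le> M / (1 - \<gamma>)"
  unfolding ncirl_value_def
  by (rule sup_abs[OF att_strats_ne], rule inf_abs(1)[OF def_strats_ne], rule gp_bound[OF T M M0 g0 g1 b])

lemma F_bound:
  assumes T: "\<forall>s a d. T s a d \<in> simplex" and b: "b \<in> simplex"
    and M: "\<And>s a d s' th. \<bar>R s a d s' th\<bar> \<le> M" and M0: "0 \<le> M"
    and g0: "0 \<le> \<gamma>" and g1: "\<gamma> < 1"
    and A: "\<pi>A \<in> att_onestage" and D: "\<pi>D \<in> def_onestage"
  shows "\<bar>stage T R \<gamma> \<pi>A \<pi>D s b (\<lambda>a d s'. ncirl_value T R \<gamma> s' (belief_update \<pi>A s b a))\<bar> \<le> M / (1 - \<gamma>)"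
proof -
  have Ar: "\<forall>s th. \<pi>A s th \<in> simplex" using A by (simp add: att_onestage_def)
  have Dr: "\<forall>s. \<pi>D s \<in> simplex" using D by (simp add: def_onestage_def)
  have "\<bar>stage T R \<gamma> \<pi>A \<pi>D s b (\<lambda>a d s'. ncirl_value T R \<gamma> s' (belief_update \<pi>A s b a))\<bar> \<le> M + \<gamma> * (M / (1 - \<gamma>))"
    by (rule stage_bound[OF T b Ar Dr M g0])
       (use V_bound[where R=R and M=M, OF T M M0 g0 g1] tau_simplex[OF b Ar] in auto)
  also have "\<dots> = M / (1 - \<gamma>)" using g1 by (simp add: field_simps)
  finally show ?thesis .
qed

lemma bellman:
  fixes T :: "'s::finite \<Rightarrow> 'a::finite \<Rightarrow> 'd::finite \<Rightarrow> 's \<Rightarrow> real"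
    and R :: "'s \<Rightarrow> 'a \<Rightarrow> 'd \<Rightarrow> 's \<Rightarrow> 't::finite \<Rightarrow> real"
  assumes T: "\<forall>s a d. T s a d \<in> simplex" and b: "b \<in> simplex"
    and M: "\<And>s a d s' th. \<bar>R s a d s' th\<bar> \<le> M" and M0: "0 \<le> M"
    and g0: "0 \<le> \<gamma>" and g1: "\<gamma> < 1"
  shows "ncirl_value T R \<gamma> s b = backup T R \<gamma> (ncirl_value T R \<gamma>) s b"
proof -
  let ?K = "M / (1 - \<gamma>)"
  let ?V = "ncirl_value T R \<gamma>"
  let ?tau = "\<lambda>\<pi>A a. belief_update \<pi>A s b a"
  let ?F = "\<lambda>\<pi>A \<pi>D. stage T R \<gamma> \<pi>A \<pi>D s b (\<lambda>a d s'. ?V s' (?tau \<pi>A a))"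
  let ?I = "\<lambda>\<pi>A. INF \<pi>D\<in>def_onestage. ?F \<pi>A \<pi>D"
  let ?p = "\<lambda>\<pi>A a. (\<Sum>th\<in>UNIV. b th * \<pi>A s th a)"
  have GV: "backup T R \<gamma> ?V s b = (SUP \<pi>A\<in>att_onestage. ?I \<pi>A)" by (rule backup_stage)
  have Fb: "\<pi>A \<in> att_onestage \<Longrightarrow> \<pi>D \<in> def_onestage \<Longrightarrow> \<bar>?F \<pi>A \<pi>D\<bar> \<le> ?K" for \<pi>A \<pi>D
    by (rule F_bound[where R=R and M=M, OF T b M M0 g0 g1])
  have Ib: "\<pi>A \<in> att_onestage \<Longrightarrow> \<bar>?I \<pi>A\<bar> \<le> ?K" for \<pi>A
    by (rule inf_abs(1)[OF def_onestage_ne Fb])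
  have Fbb: "\<pi>A \<in> att_onestage \<Longrightarrow> bdd_below (?F \<pi>A ` def_onestage)" for \<pi>A
    by (rule inf_abs(2)[OF def_onestage_ne Fb])
  have bddI: "bdd_above (?I ` att_onestage)"
    by (rule inf_abs(3)[OF att_onestage_ne Ib])
  have Qb: "b' \<in> simplex \<Longrightarrow> \<sigma>A \<in> att_strats \<Longrightarrow> \<sigma>D \<in> def_strats \<Longrightarrow> \<bar>game_payoff T R \<gamma> \<sigma>A \<sigma>D s' b'\<bar> \<le> ?K" for b' \<sigma>A \<sigma>D s'
    by (rule gp_bound[where R=R and M=M, OF T M M0 g0 g1])
  have Qbb: "b' \<in> simplex \<Longrightarrow> \<sigma>A \<in> att_strats \<Longrightarrow> bdd_below ((\<lambda>\<sigma>D. game_payoff T R \<gamma> \<sigma>A \<sigma>D s' b') ` def_strats)" for b' \<sigma>A s'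
    by (rule inf_abs(2)[OF def_strats_ne Qb])
  have QIb: "b' \<in> simplex \<Longrightarrow> \<sigma>A \<in> att_strats \<Longrightarrow> \<bar>INF \<sigma>D\<in>def_strats. game_payoff T R \<gamma> \<sigma>A \<sigma>D s' b'\<bar> \<le> ?K" for b' \<sigma>A s'
    by (rule inf_abs(1)[OF def_strats_ne Qb])
  have QIbb: "b' \<in> simplex \<Longrightarrow> bdd_above ((\<lambda>\<sigma>A. INF \<sigma>D\<in>def_strats. game_payoff T R \<gamma> \<sigma>A \<sigma>D s' b') ` att_strats)" for b' s'
    by (rule inf_abs(3)[OF att_strats_ne QIb])
  have Vdef: "?V s' b' = (SUP \<sigma>A\<in>att_strats. INF \<sigma>D\<in>def_strats. game_payoff T R \<gamma> \<sigma>A \<sigma>D s' b')" for s' b'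
    by (simp add: ncirl_value_def)
  have gl: "1 * e \<ge> \<gamma> * e" if "e > 0" for e using g1 that by (intro mult_right_mono) auto

  have le1: "?V s b \<le> (SUP \<pi>A\<in>att_onestage. ?I \<pi>A)"
    unfolding Vdef[of s b]
  proof (rule cSUP_least[OF att_strats_ne])
    fix \<sigma>A :: "('s \<times> 'a \<times> 'd) list \<Rightarrow> 's \<Rightarrow> 't \<Rightarrow> 'a \<Rightarrow> real" assume sA: "\<sigma>A \<in> att_strats"
    let ?\<pi> = "\<sigma>A []"
    have piA: "?\<pi> \<in> att_onestage" by (rule rootA_mem[OF sA])
    have Ar: "\<forall>s th. ?\<pi> s th \<in> simplex" using piA by (simp add: att_onestage_def)
    have "(INF \<sigma>D\<in>def_strats. game_payoff T R \<gamma> \<sigma>A \<sigma>D s b) \<le> ?I ?\<pi>"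
    proof (rule cINF_greatest[OF def_onestage_ne])
      fix \<pi>D :: "'s \<Rightarrow> 'd \<Rightarrow> real" assume pD: "\<pi>D \<in> def_onestage"
      have Dr: "\<forall>s. \<pi>D s \<in> simplex" using pD by (simp add: def_onestage_def)
      show "(INF \<sigma>D\<in>def_strats. game_payoff T R \<gamma> \<sigma>A \<sigma>D s b) \<le> ?F ?\<pi> \<pi>D"
      proof (rule field_le_epsilon)
        fix e :: real assume e: "0 < e"
        have ex: "\<exists>\<sigma>D'. \<sigma>D' \<in> def_strats \<and> (?p ?\<pi> a \<noteq> 0 \<longrightarrow>
             game_payoff T R \<gamma> (shiftS (s, a, d) \<sigma>A) \<sigma>D' s' (?tau ?\<pi> a) \<le> ?V s' (?tau ?\<pi> a) + e)" for a d s'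
        proof (cases "?p ?\<pi> a = 0")
          case True
          then show ?thesis using def_strats_ne by blast
        next
          case False
          have ts: "?tau ?\<pi> a \<in> simplex" by (rule tau_simplex[OF b Ar False])
          have sh: "shiftS (s, a, d) \<sigma>A \<in> att_strats" by (rule shiftA_mem[OF sA])
          have "(INF \<sigma>D\<in>def_strats. game_payoff T R \<gamma> (shiftS (s, a, d) \<sigma>A) \<sigma>D s' (?tau ?\<pi> a)) \<le> ?V s' (?tau ?\<pi> a)"
            unfolding Vdef[of s' "?tau ?\<pi> a"] by (rule cSUP_upper[OF sh QIbb[OF ts]])
          then have "(INF \<sigma>D\<in>def_strats. game_payoff T R \<gamma> (shiftS (s, a, d) \<sigma>A) \<sigma>D s' (?tau ?\<pi> a)) < ?V s' (?tau ?\<pi> a) + e"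
            using e by linarith
          then obtain \<sigma>D' where "\<sigma>D' \<in> def_strats" "game_payoff T R \<gamma> (shiftS (s, a, d) \<sigma>A) \<sigma>D' s' (?tau ?\<pi> a) < ?V s' (?tau ?\<pi> a) + e"
            using cINF_less_iff[OF def_strats_ne Qbb[OF ts sh]] by blast
          then show ?thesis by (intro exI[of _ \<sigma>D']) simp
        qed
        obtain cD where cD: "\<And>a d s'. cD a d s' \<in> def_strats \<and> (?p ?\<pi> a \<noteq> 0 \<longrightarrow>
             game_payoff T R \<gamma> (shiftS (s, a, d) \<sigma>A) (cD a d s') s' (?tau ?\<pi> a) \<le> ?V s' (?tau ?\<pi> a) + e)"
          by (rule that, rule someI_ex[OF ex])
        let ?\<sigma>D = "glue \<pi>D cD"
        have sD: "?\<sigma>D \<in> def_strats" by (rule glueD_mem[OF pD]) (use cD in blast)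
        have "(INF \<sigma>D\<in>def_strats. game_payoff T R \<gamma> \<sigma>A \<sigma>D s b) \<le> game_payoff T R \<gamma> \<sigma>A ?\<sigma>D s b"
          by (rule cINF_lower[OF Qbb[OF b sA] sD])
        also have "\<dots> = stage T R \<gamma> ?\<pi> \<pi>D s b (\<lambda>a d s'. game_payoff T R \<gamma> (shiftS (s, a, d) \<sigma>A) (cD a d s') s' (?tau ?\<pi> a))"
        proof -
          have "game_payoff T R \<gamma> (shiftS (s, a, d) \<sigma>A) (shiftS (s, a, d) ?\<sigma>D) s' (?tau ?\<pi> a) = game_payoff T R \<gamma> (shiftS (s, a, d) \<sigma>A) (cD a d s') s' (?tau ?\<pi> a)" for a d s'
            by (rule gp_loc) (use glue_loc[of s' s a d \<pi>D cD] in auto)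
          then show ?thesis
            unfolding dec[OF T b sA sD M g0 g1] glue_nil by simp
        qed
        also have "\<dots> \<le> ?F ?\<pi> \<pi>D + \<gamma> * e"
          by (rule stage_le[OF T b Ar Dr g0]) (use cD in blast)
        also have "\<dots> \<le> ?F ?\<pi> \<pi>D + e" using gl[OF e] by simp
        finally show "(INF \<sigma>D\<in>def_strats. game_payoff T R \<gamma> \<sigma>A \<sigma>D s b) \<le> ?F ?\<pi> \<pi>D + e" .
      qed
    qed
    also have "\<dots> \<le> (SUP \<pi>A\<in>att_onestage. ?I \<pi>A)" by (rule cSUP_upper[OF piA bddI])
    finally show "(INF \<sigma>D\<in>def_strats. game_payoff T R \<gamma> \<sigma>A \<sigma>D s b) \<le> (SUP \<pi>A\<in>att_onestage. ?I \<pi>A)" .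
  qed

  have le2: "(SUP \<pi>A\<in>att_onestage. ?I \<pi>A) \<le> ?V s b"
  proof (rule cSUP_least[OF att_onestage_ne])
    fix \<pi>A :: "'s \<Rightarrow> 't \<Rightarrow> 'a \<Rightarrow> real" assume pA: "\<pi>A \<in> att_onestage"
    have Ar: "\<forall>s th. \<pi>A s th \<in> simplex" using pA by (simp add: att_onestage_def)
    show "?I \<pi>A \<le> ?V s b"
    proof (rule field_le_epsilon)
      fix e :: real assume e: "0 < e"
      have ex: "\<exists>\<sigma>A'. \<sigma>A' \<in> att_strats \<and> (?p \<pi>A a \<noteq> 0 \<longrightarrow>
             ?V s' (?tau \<pi>A a) - e \<le> (INF \<sigma>D\<in>def_strats. game_payoff T R \<gamma> \<sigma>A' \<sigma>D s' (?tau \<pi>A a)))" for a and d :: 'd and s'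
      proof (cases "?p \<pi>A a = 0")
        case True
        then show ?thesis using att_strats_ne by blast
      next
        case False
        have ts: "?tau \<pi>A a \<in> simplex" by (rule tau_simplex[OF b Ar False])
        have "?V s' (?tau \<pi>A a) - e < (SUP \<sigma>A\<in>att_strats. INF \<sigma>D\<in>def_strats. game_payoff T R \<gamma> \<sigma>A \<sigma>D s' (?tau \<pi>A a))"
          using e Vdef[of s' "?tau \<pi>A a"] by linarith
        then obtain \<sigma>A' where "\<sigma>A' \<in> att_strats" "?V s' (?tau \<pi>A a) - e < (INF \<sigma>D\<in>def_strats. game_payoff T R \<gamma> \<sigma>A' \<sigma>D s' (?tau \<pi>A a))"
          using less_cSUP_iff[OF att_strats_ne QIbb[OF ts]] by blast
        then show ?thesis by (intro exI[of _ \<sigma>A']) simp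
      qed
      obtain cA where cA: "\<And>a (d::'d) s'. cA a d s' \<in> att_strats \<and> (?p \<pi>A a \<noteq> 0 \<longrightarrow>
             ?V s' (?tau \<pi>A a) - e \<le> (INF \<sigma>D\<in>def_strats. game_payoff T R \<gamma> (cA a d s') \<sigma>D s' (?tau \<pi>A a)))"
        by (rule that, rule someI_ex[OF ex])
      let ?\<sigma>A = "glue \<pi>A cA"
      have sA: "?\<sigma>A \<in> att_strats" by (rule glueA_mem[OF pA]) (use cA in blast)
      have "?I \<pi>A - e \<le> (INF \<sigma>D\<in>def_strats. game_payoff T R \<gamma> ?\<sigma>A \<sigma>D s b)"
      proof (rule cINF_greatest[OF def_strats_ne])
        fix \<sigma>D :: "('s \<times> 'a \<times> 'd) list \<Rightarrow> 's \<Rightarrow> 'd \<Rightarrow> real" assume sD: "\<sigma>D \<in> def_strats"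
        have pD: "\<sigma>D [] \<in> def_onestage" by (rule rootD_mem[OF sD])
        have Dr: "\<forall>s. \<sigma>D [] s \<in> simplex" using pD by (simp add: def_onestage_def)
        have eqQ: "game_payoff T R \<gamma> ?\<sigma>A \<sigma>D s b = stage T R \<gamma> \<pi>A (\<sigma>D []) s b (\<lambda>a d s'. game_payoff T R \<gamma> (cA a d s') (shiftS (s, a, d) \<sigma>D) s' (?tau \<pi>A a))"
        proof -
          have "game_payoff T R \<gamma> (shiftS (s, a, d) ?\<sigma>A) (shiftS (s, a, d) \<sigma>D) s' (?tau \<pi>A a) = game_payoff T R \<gamma> (cA a d s') (shiftS (s, a, d) \<sigma>D) s' (?tau \<pi>A a)" for a d s'
            by (rule gp_loc) (use glue_loc[of s' s a d \<pi>A cA] in auto)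
          then show ?thesis
            unfolding dec[OF T b sA sD M g0 g1] glue_nil by simp
        qed
        have "?F \<pi>A (\<sigma>D []) \<le> stage T R \<gamma> \<pi>A (\<sigma>D []) s b (\<lambda>a d s'. game_payoff T R \<gamma> (cA a d s') (shiftS (s, a, d) \<sigma>D) s' (?tau \<pi>A a)) + \<gamma> * e"
        proof (rule stage_le[OF T b Ar Dr g0], intro allI impI)
          fix a d s' assume pa: "?p \<pi>A a \<noteq> 0"
          have ts: "?tau \<pi>A a \<in> simplex" by (rule tau_simplex[OF b Ar pa])
          have "(INF \<sigma>D\<in>def_strats. game_payoff T R \<gamma> (cA a d s') \<sigma>D s' (?tau \<pi>A a)) \<le> game_payoff T R \<gamma> (cA a d s') (shiftS (s, a, d) \<sigma>D) s' (?tau \<pi>A a)"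
            by (rule cINF_lower[OF Qbb[OF ts] shiftD_mem[OF sD]]) (use cA in blast)
          then show "?V s' (?tau \<pi>A a) \<le> game_payoff T R \<gamma> (cA a d s') (shiftS (s, a, d) \<sigma>D) s' (?tau \<pi>A a) + e"
            using cA[of a d s'] pa by linarith
        qed
        moreover have "?I \<pi>A \<le> ?F \<pi>A (\<sigma>D [])" by (rule cINF_lower[OF Fbb[OF pA] pD])
        ultimately show "?I \<pi>A - e \<le> game_payoff T R \<gamma> ?\<sigma>A \<sigma>D s b" using eqQ gl[OF e] by linarith
      qed
      moreover have "(INF \<sigma>D\<in>def_strats. game_payoff T R \<gamma> ?\<sigma>A \<sigma>D s b) \<le> ?V s b"
        unfolding Vdef[of s b] by (rule cSUP_upper[OF sA QIbb[OF b]])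
      ultimately show "?I \<pi>A \<le> ?V s b + e" by linarith
    qed
  qed
  show ?thesis using le1 le2 GV by linarith
qed

lemma supinf_le:
  assumes A: "A \<noteq> {}" and B: "B \<noteq> {}"
    and fb: "\<And>x y. x \<in> A \<Longrightarrow> y \<in> B \<Longrightarrow> \<bar>f x y\<bar> \<le> (c::real)"
    and gb: "\<And>x y. x \<in> A \<Longrightarrow> y \<in> B \<Longrightarrow> \<bar>g x y\<bar> \<le> c"
    and fg: "\<And>x y. x \<in> A \<Longrightarrow> y \<in> B \<Longrightarrow> f x y \<le> g x y + \<delta>"
  shows "(SUP x\<in>A. INF y\<in>B. f x y) \<le> (SUP x\<in>A. INF y\<in>B. g x y) + \<delta>"
proof (rule cSUP_least[OF A])
  fix x assume x: "x \<in> A"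
  have "(INF y\<in>B. f x y) - \<delta> \<le> (INF y\<in>B. g x y)"
  proof (rule cINF_greatest[OF B])
    fix y assume y: "y \<in> B"
    have "(INF y\<in>B. f x y) \<le> f x y" by (rule cINF_lower[OF inf_abs(2)[OF B fb[OF x]] y])
    then show "(INF y\<in>B. f x y) - \<delta> \<le> g x y" using fg[OF x y] by linarith
  qed
  moreover have "(INF y\<in>B. g x y) \<le> (SUP x\<in>A. INF y\<in>B. g x y)"
    by (rule cSUP_upper[OF x inf_abs(3)[OF A inf_abs(1)[OF B gb]]])
  ultimately show "(INF y\<in>B. f x y) \<le> (SUP x\<in>A. INF y\<in>B. g x y) + \<delta>" by linarith
qed

lemma bounded_vfE: "bounded_vf v \<Longrightarrow> (\<And>B. (\<And>s b. b \<in> simplex \<Longrightarrow> \<bar>v s b\<bar> \<le> B) \<Longrightarrow> P) \<Longrightarrow> P"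
  unfolding bounded_vf_def by blast

lemma sd_upper:
  assumes v: "bounded_vf v" and w: "bounded_vf w" and b: "b \<in> simplex"
  shows "\<bar>v s b - w s b\<bar> \<le> sup_dist v w"
proof -
  obtain Bv where Bv: "\<And>s b. b \<in> simplex \<Longrightarrow> \<bar>v s b\<bar> \<le> Bv" using v unfolding bounded_vf_def by blast
  obtain Bw where Bw: "\<And>s b. b \<in> simplex \<Longrightarrow> \<bar>w s b\<bar> \<le> Bw" using w unfolding bounded_vf_def by blast
  have bdd: "bdd_above ((\<lambda>p. \<bar>v (fst p) (snd p) - w (fst p) (snd p)\<bar>) ` (UNIV \<times> simplex))"
  proof (rule bdd_aboveI2[of _ _ "Bv + Bw"])
    fix p :: "'a \<times> ('b \<Rightarrow> real)" assume "p \<in> UNIV \<times> simplex"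
    then have "snd p \<in> simplex" by auto
    then show "\<bar>v (fst p) (snd p) - w (fst p) (snd p)\<bar> \<le> Bv + Bw"
      using Bv[of "snd p" "fst p"] Bw[of "snd p" "fst p"] by linarith
  qed
  have "(s, b) \<in> UNIV \<times> simplex" using b by simp
  from cSUP_upper[OF this bdd] show ?thesis by (simp add: sup_dist_def)
qed

lemma sd_least:
  assumes "\<And>s b. b \<in> simplex \<Longrightarrow> \<bar>v s b - w s b\<bar> \<le> c"
  shows "sup_dist v w \<le> c"
proof -
  obtain q :: "'b \<Rightarrow> real" where q: "q \<in> simplex" using simplex_ex by blast
  have ne: "UNIV \<times> (simplex :: ('b \<Rightarrow> real) set) \<noteq> {}" using q by blast
  show ?thesis unfolding sup_dist_def
    by (rule cSUP_least[OF ne]) (use assms in auto)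
qed

lemma sd_nonneg:
  assumes v: "bounded_vf v" and w: "bounded_vf (w :: 's \<Rightarrow> ('t::finite \<Rightarrow> real) \<Rightarrow> real)"
  shows "0 \<le> sup_dist v w"
proof -
  obtain q :: "'t \<Rightarrow> real" where q: "q \<in> simplex" using simplex_ex by blast
  have "\<bar>v undefined q - w undefined q\<bar> \<le> sup_dist v w" by (rule sd_upper[OF v w q])
  then show ?thesis by linarith
qed

lemma backup_bound:
  fixes T :: "'s::finite \<Rightarrow> 'a::finite \<Rightarrow> 'd::finite \<Rightarrow> 's \<Rightarrow> real"
    and R :: "'s \<Rightarrow> 'a \<Rightarrow> 'd \<Rightarrow> 's \<Rightarrow> 't::finite \<Rightarrow> real"
  assumes T: "\<forall>s a d. T s a d \<in> simplex" and b: "b \<in> simplex"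
    and M: "\<And>s a d s' th. \<bar>R s a d s' th\<bar> \<le> M"
    and g0: "0 \<le> \<gamma>" and Bv: "\<And>s b. b \<in> simplex \<Longrightarrow> \<bar>v s b\<bar> \<le> B"
    and A: "\<pi>A \<in> att_onestage" and D: "\<pi>D \<in> def_onestage"
  shows "\<bar>stage T R \<gamma> \<pi>A \<pi>D s b (\<lambda>a d s'. v s' (belief_update \<pi>A s b a))\<bar> \<le> M + \<gamma> * B"
proof -
  have Ar: "\<forall>s th. \<pi>A s th \<in> simplex" using A by (simp add: att_onestage_def)
  have Dr: "\<forall>s. \<pi>D s \<in> simplex" using D by (simp add: def_onestage_def)
  show ?thesis
    by (rule stage_bound[where R=R and M=M, OF T b Ar Dr M g0]) (use Bv tau_simplex[OF b Ar] in auto)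
qed

lemma contraction:
  fixes T :: "'s::finite \<Rightarrow> 'a::finite \<Rightarrow> 'd::finite \<Rightarrow> 's \<Rightarrow> real"
    and R :: "'s \<Rightarrow> 'a \<Rightarrow> 'd \<Rightarrow> 's \<Rightarrow> 't::finite \<Rightarrow> real"
  assumes T: "\<forall>s a d. T s a d \<in> simplex"
    and M: "\<And>s a d s' th. \<bar>R s a d s' th\<bar> \<le> M"
    and g0: "0 \<le> \<gamma>" and v: "bounded_vf v" and w: "bounded_vf w"
  shows "bounded_vf (backup T R \<gamma> v) \<and> sup_dist (backup T R \<gamma> v) (backup T R \<gamma> w) \<le> \<gamma> * sup_dist v w"
proof -
  obtain Bv where Bv: "\<And>s b. b \<in> simplex \<Longrightarrow> \<bar>v s b\<bar> \<le> Bv" using v unfolding bounded_vf_def by blast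
  obtain Bw where Bw: "\<And>s b. b \<in> simplex \<Longrightarrow> \<bar>w s b\<bar> \<le> Bw" using w unfolding bounded_vf_def by blast
  let ?c = "M + \<gamma> * (\<bar>Bv\<bar> + \<bar>Bw\<bar>)"
  have Bv': "\<And>s b. b \<in> simplex \<Longrightarrow> \<bar>v s b\<bar> \<le> \<bar>Bv\<bar> + \<bar>Bw\<bar>" using Bv by (meson abs_ge_self add_increasing2 abs_ge_zero order_trans)
  have Bw': "\<And>s b. b \<in> simplex \<Longrightarrow> \<bar>w s b\<bar> \<le> \<bar>Bv\<bar> + \<bar>Bw\<bar>" using Bw by (meson abs_ge_self add_increasing abs_ge_zero order_trans)
  have fv: "\<bar>stage T R \<gamma> \<pi>A \<pi>D s b (\<lambda>a d s'. v s' (belief_update \<pi>A s b a))\<bar> \<le> ?c"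
    if "b \<in> simplex" "\<pi>A \<in> att_onestage" "\<pi>D \<in> def_onestage" for s b \<pi>A \<pi>D
    by (rule backup_bound[where R=R and M=M, OF T that(1) M g0 Bv' that(2,3)])
  have fw: "\<bar>stage T R \<gamma> \<pi>A \<pi>D s b (\<lambda>a d s'. w s' (belief_update \<pi>A s b a))\<bar> \<le> ?c"
    if "b \<in> simplex" "\<pi>A \<in> att_onestage" "\<pi>D \<in> def_onestage" for s b \<pi>A \<pi>D
    by (rule backup_bound[where R=R and M=M, OF T that(1) M g0 Bw' that(2,3)])
  have bnd: "bounded_vf (backup T R \<gamma> v)"
    unfolding bounded_vf_def backup_stage
    by (intro exI[of _ ?c] allI ballI sup_abs[OF att_onestage_ne] inf_abs(1)[OF def_onestage_ne] fv)
  let ?D = "sup_dist v w"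
  have pd: "\<bar>stage T R \<gamma> \<pi>A \<pi>D s b (\<lambda>a d s'. v s' (belief_update \<pi>A s b a)) -
             stage T R \<gamma> \<pi>A \<pi>D s b (\<lambda>a d s'. w s' (belief_update \<pi>A s b a))\<bar> \<le> \<gamma> * ?D"
    if b: "b \<in> simplex" and A: "\<pi>A \<in> att_onestage" and D: "\<pi>D \<in> def_onestage" for s b \<pi>A \<pi>D
  proof -
    have Ar: "\<forall>s th. \<pi>A s th \<in> simplex" using A by (simp add: att_onestage_def)
    have Dr: "\<forall>s. \<pi>D s \<in> simplex" using D by (simp add: def_onestage_def)
    show ?thesis
      by (rule stage_diff[OF T b Ar Dr g0]) (use sd_upper[OF v w] tau_simplex[OF b Ar] in auto)
  qed
  have "sup_dist (backup T R \<gamma> v) (backup T R \<gamma> w) \<le> \<gamma> * ?D"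
  proof (rule sd_least)
    fix s and b :: "'t \<Rightarrow> real" assume b: "b \<in> simplex"
    have 1: "backup T R \<gamma> v s b \<le> backup T R \<gamma> w s b + \<gamma> * ?D"
      unfolding backup_stage
      apply (rule supinf_le[OF att_onestage_ne def_onestage_ne fv[OF b] fw[OF b]], assumption+)
      subgoal premises pr for \<pi>A \<pi>D using abs_le_D1[OF pd[where s=s, OF b pr]] by linarith
      done
    have 2: "backup T R \<gamma> w s b \<le> backup T R \<gamma> v s b + \<gamma> * ?D"
      unfolding backup_stage
      apply (rule supinf_le[OF att_onestage_ne def_onestage_ne fw[OF b] fv[OF b]], assumption+)
      subgoal premises pr for \<pi>A \<pi>D using abs_le_D2[OF pd[where s=s, OF b pr]] by linarith
      done
    show "\<bar>backup T R \<gamma> v s b - backup T R \<gamma> w s b\<bar> \<le> \<gamma> * ?D" using 1 2 by linarith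
  qed
  with bnd show ?thesis by blast
qed

theorem lemma2:
  fixes T :: "'s::finite \<Rightarrow> 'a::finite \<Rightarrow> 'd::finite \<Rightarrow> 's \<Rightarrow> real"
    and R :: "'s \<Rightarrow> 'a \<Rightarrow> 'd \<Rightarrow> 's \<Rightarrow> 't::finite \<Rightarrow> real"
    and \<gamma> :: real
  assumes T_dist: "\<forall>s a d. T s a d \<in> simplex"
    and \<gamma>_nonneg: "0 \<le> \<gamma>" and \<gamma>_lt1: "\<gamma> < 1"
  shows "(\<exists>L. 0 \<le> L \<and> L < 1 \<and>
            (\<forall>v w. bounded_vf v \<longrightarrow> bounded_vf w \<longrightarrow>
               bounded_vf (backup T R \<gamma> v) \<and>
               sup_dist (backup T R \<gamma> v) (backup T R \<gamma> w) \<le> L * sup_dist v w))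
       \<and> bounded_vf (ncirl_value T R \<gamma>)
       \<and> (\<forall>s. \<forall>b\<in>simplex. ncirl_value T R \<gamma> s b = backup T R \<gamma> (ncirl_value T R \<gamma>) s b)
       \<and> (\<forall>v0. bounded_vf v0 \<longrightarrow>
            (\<lambda>n. sup_dist ((backup T R \<gamma> ^^ n) v0) (ncirl_value T R \<gamma>)) \<longlonglongrightarrow> 0)"
proof -
  obtain M where M0: "0 \<le> M" and M: "\<And>s a d s' th. \<bar>R s a d s' th\<bar> \<le> M"
    by (rule R_bound[of R]) blast
  note T = T_dist and g0 = \<gamma>_nonneg and g1 = \<gamma>_lt1
  let ?G = "backup T R \<gamma>"
  let ?V = "ncirl_value T R \<gamma>"
  have C: "bounded_vf v \<Longrightarrow> bounded_vf w \<Longrightarrow> bounded_vf (?G v) \<and> sup_dist (?G v) (?G w) \<le> \<gamma> * sup_dist v w"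
    for v w :: "'s \<Rightarrow> ('t \<Rightarrow> real) \<Rightarrow> real"
    by (rule contraction[where R=R and M=M, OF T M g0])
  have P1: "\<exists>L. 0 \<le> L \<and> L < 1 \<and>
            (\<forall>v w. bounded_vf v \<longrightarrow> bounded_vf w \<longrightarrow>
               bounded_vf (?G v) \<and> sup_dist (?G v) (?G w) \<le> L * sup_dist v w)"
    using C g0 g1 by blast
  have P2: "bounded_vf ?V"
    unfolding bounded_vf_def using V_bound[where R=R and M=M, OF T M M0 g0 g1] by blast
  have P3: "\<forall>s. \<forall>b\<in>simplex. ?V s b = ?G ?V s b"
    using bellman[where R=R and M=M, OF T _ M M0 g0 g1] by blast
  have P4: "(\<lambda>n. sup_dist ((?G ^^ n) v0) ?V) \<longlonglongrightarrow> 0" if v0: "bounded_vf v0" for v0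
  proof -
    have ub: "bounded_vf ((?G ^^ n) v0)" for n
      by (induction n) (use v0 C in auto)
    let ?D = "sup_dist v0 ?V"
    have le: "sup_dist ((?G ^^ n) v0) ?V \<le> \<gamma> ^ n * ?D" for n
    proof (induction n)
      case 0
      then show ?case by simp
    next
      case (Suc n)
      have "sup_dist ((?G ^^ Suc n) v0) ?V \<le> \<gamma> * sup_dist ((?G ^^ n) v0) ?V"
      proof (rule sd_least)
        fix s and b :: "'t \<Rightarrow> real" assume b: "b \<in> simplex"
        have "\<bar>(?G ^^ Suc n) v0 s b - ?V s b\<bar> = \<bar>?G ((?G ^^ n) v0) s b - ?G ?V s b\<bar>"
          using P3 b by simp
        also have "\<dots> \<le> sup_dist (?G ((?G ^^ n) v0)) (?G ?V)"
          by (rule sd_upper[OF conjunct1[OF C[OF ub P2]] conjunct1[OF C[OF P2 P2]] b])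
        also have "\<dots> \<le> \<gamma> * sup_dist ((?G ^^ n) v0) ?V"
          by (rule conjunct2[OF C[OF ub P2]])
        finally show "\<bar>(?G ^^ Suc n) v0 s b - ?V s b\<bar> \<le> \<gamma> * sup_dist ((?G ^^ n) v0) ?V" .
      qed
      also have "\<dots> \<le> \<gamma> * (\<gamma> ^ n * ?D)" by (rule mult_left_mono[OF Suc.IH g0])
      finally show ?case by (simp add: mult.assoc)
    qed
    have nn: "0 \<le> sup_dist ((?G ^^ n) v0) ?V" for n by (rule sd_nonneg[OF ub P2])
    have "(\<lambda>n. \<gamma> ^ n * ?D) \<longlonglongrightarrow> 0 * ?D"
      by (intro tendsto_mult tendsto_const LIMSEQ_power_zero) (use g0 g1 in simp)
    then have lim: "(\<lambda>n. \<gamma> ^ n * ?D) \<longlonglongrightarrow> 0" by simp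
    show ?thesis
      by (rule tendsto_sandwich[OF always_eventually always_eventually tendsto_const lim])
         (use nn le in auto)
  qed
  show ?thesis using P1 P2 P3 P4 by blast
qed

end
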